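(* Let $n\ge 3$ with $n\equiv 1$ or $3 \pmod 6$, and let $S_n$ be a Steiner latin square of order $n$. Then $$t(S_n)\ \ge\ \frac{6^{\lceil (n-1)/6\rceil-1}\,\lfloor n/3\rfloor!}{\lceil (n-1)/6\rceil!\,\lceil (n-1)/6\rceil}.$$
   Context: A latin square of order $n$ is an $n\times n$ array with entries from $\{0,1,\dots,n-1\}$ in which each symbol occurs exactly once in each row and each column; it is identified with the set of ordered triples $(r,c,s)$ meaning symbol $s$ is in row $r$, column $c$. A transversal of a latin square is a set of $n$ entries containing exactly one entry from each row and each column and in which no symbol is repeated. $t(A)$ denotes the number of transversals of the latin square $A$. A Steiner triple system (STS) on an $n$-element set $X$ is a set of $3$-element subsets of $X$ such that every $2$-element subset of $X$ lies in exactly one of them. The Steiner latin square of an STS on $X=\{0,\dots,n-1\}$ is the latin square consisting of the triples $(a,a,a)$ for all $a\in X$ together with all six ordered triples $(x,y,z)$ obtained by ordering each triple $\{x,y,z\}$ of the STS; i.e. the entry in row $x$, column $y$ is $x$ if $x=y$, and otherwise is the third element of the unique STS triple containing $x$ and $y$. A Steiner latin square of order $n$ is one arising in this way from some STS of order $n$. *)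

theory Defs
  imports Complex_Main
begin

definition latin_square :: "nat \<Rightarrow> (nat \<times> nat \<times> nat) set \<Rightarrow> bool" where
  "latin_square n L \<longleftrightarrow> L \<subseteq> {0..<n} \<times> {0..<n} \<times> {0..<n} \<and>
     (\<forall>r\<in>{0..<n}. \<forall>c\<in>{0..<n}. \<exists>!s. (r, c, s) \<in> L) \<and>
     (\<forall>r\<in>{0..<n}. \<forall>s\<in>{0..<n}. \<exists>!c. (r, c, s) \<in> L) \<and>
     (\<forall>c\<in>{0..<n}. \<forall>s\<in>{0..<n}. \<exists>!r. (r, c, s) \<in> L)"

definition transversal :: "nat \<Rightarrow> (nat \<times> nat \<times> nat) set \<Rightarrow> (nat \<times> nat \<times> nat) set \<Rightarrow> bool" where
  "transversal n L T \<longleftrightarrow> T \<subseteq> L \<and> card T = n \<and>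
     (\<lambda>(r, c, s). r) ` T = {0..<n} \<and>
     (\<lambda>(r, c, s). c) ` T = {0..<n} \<and>
     inj_on (\<lambda>(r, c, s). s) T"

definition num_transversals :: "nat \<Rightarrow> (nat \<times> nat \<times> nat) set \<Rightarrow> nat" where
  "num_transversals n L = card {T. transversal n L T}"

definition steiner_triple_system :: "nat \<Rightarrow> nat set set \<Rightarrow> bool" where
  "steiner_triple_system n B \<longleftrightarrow>
     (\<forall>b\<in>B. b \<subseteq> {0..<n} \<and> card b = 3) \<and>
     (\<forall>x\<in>{0..<n}. \<forall>y\<in>{0..<n}. x \<noteq> y \<longrightarrow> (\<exists>!b. b \<in> B \<and> {x, y} \<subseteq> b))"

definition steiner_latin_square :: "nat \<Rightarrow> nat set set \<Rightarrow> (nat \<times> nat \<times> nat) set" where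
  "steiner_latin_square n B =
     {(a, a, a) | a. a \<in> {0..<n}} \<union>
     {(x, y, z) | x y z. {x, y, z} \<in> B \<and> x \<noteq> y \<and> y \<noteq> z \<and> x \<noteq> z}"

definition is_steiner_latin_square :: "nat \<Rightarrow> (nat \<times> nat \<times> nat) set \<Rightarrow> bool" where
  "is_steiner_latin_square n L \<longleftrightarrow> (\<exists>B. steiner_triple_system n B \<and> L = steiner_latin_square n B)"

end

theory Submission
  imports Defs "HOL-Combinatorics.Multiset_Permutations"
begin


definition OT :: "nat set set \<Rightarrow> (nat \<times> nat \<times> nat) set" where
  "OT B = {(x, y, z) | x y z. {x, y, z} \<in> B \<and> x \<noteq> y \<and> y \<noteq> z \<and> x \<noteq> z}"

fun rot :: "nat \<times> nat \<times> nat \<Rightarrow> nat \<times> nat \<times> nat" where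
  "rot (x, y, z) = (y, z, x)"

definition cyc :: "nat \<times> nat \<times> nat \<Rightarrow> (nat \<times> nat \<times> nat) set" where
  "cyc t = {t, rot t, rot (rot t)}"

definition csupp :: "(nat \<times> nat \<times> nat) set \<Rightarrow> nat set" where
  "csupp C = (\<lambda>(r, c, s). r) ` C"

definition used :: "(nat \<times> nat \<times> nat) set list \<Rightarrow> nat set" where
  "used cs = \<Union>(csupp ` set cs)"

lemma OT_perm:
  assumes "(x, y, z) \<in> OT B"
  shows "(y, z, x) \<in> OT B" "(x, z, y) \<in> OT B"
proof -
  have "{y, z, x} = {x, y, z}" "{x, z, y} = {x, y, z}" by auto
  then show "(y, z, x) \<in> OT B" "(x, z, y) \<in> OT B" using assms by (auto simp: OT_def)
qed

lemma OT_distinct: "(x, y, z) \<in> OT B \<Longrightarrow> x \<noteq> y \<and> y \<noteq> z \<and> x \<noteq> z"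
  by (auto simp: OT_def)

lemma cyc_simp: "cyc (x, y, z) = {(x, y, z), (y, z, x), (z, x, y)}"
  by (simp add: cyc_def)

lemma cyc_self: "t \<in> cyc t"
  by (simp add: cyc_def)

lemma cyc_eq: "t' \<in> cyc t \<Longrightarrow> cyc t' = cyc t"
  by (cases t) (auto simp: cyc_simp)

lemma cyc_OT: "t \<in> OT B \<Longrightarrow> cyc t \<subseteq> OT B"
  by (cases t) (auto simp: cyc_simp intro: OT_perm)

lemma cyc_proj:
  assumes "x \<noteq> y" "y \<noteq> z" "x \<noteq> z"
  shows "(\<lambda>(r, c, s). r) ` cyc (x, y, z) = {x, y, z}"
    "(\<lambda>(r, c, s). c) ` cyc (x, y, z) = {x, y, z}"
    "(\<lambda>(r, c, s). s) ` cyc (x, y, z) = {x, y, z}"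
    "inj_on (\<lambda>(r, c, s). r) (cyc (x, y, z))"
    "inj_on (\<lambda>(r, c, s). c) (cyc (x, y, z))"
    "inj_on (\<lambda>(r, c, s). s) (cyc (x, y, z))"
  using assms by (auto simp: cyc_simp)

lemma card_cyc: "x \<noteq> y \<Longrightarrow> y \<noteq> z \<Longrightarrow> x \<noteq> z \<Longrightarrow> card (cyc (x, y, z)) = 3"
  by (simp add: cyc_simp)

lemma card_cyc_image:
  assumes "finite A" "\<And>t. t \<in> A \<Longrightarrow> cyc t \<subseteq> A"
    "\<And>x y z. (x, y, z) \<in> A \<Longrightarrow> x \<noteq> y \<and> y \<noteq> z \<and> x \<noteq> z"
  shows "card A = 3 * card (cyc ` A)"
proof -
  have U: "A = \<Union>(cyc ` A)" using assms(2) cyc_self by blast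
  have fin: "\<And>C. C \<in> cyc ` A \<Longrightarrow> finite C" by (auto simp: cyc_def)
  have disj: "pairwise disjnt (cyc ` A)"
    unfolding pairwise_def disjnt_def
    by (metis cyc_eq disjoint_iff imageE)
  have "card A = sum card (cyc ` A)"
    using card_Union_disjoint[OF disj fin] U by simp
  also have "\<dots> = sum (\<lambda>_. 3) (cyc ` A)"
  proof (rule sum.cong)
    fix C assume "C \<in> cyc ` A"
    then obtain x y z where "(x, y, z) \<in> A" "C = cyc (x, y, z)" by auto
    then show "card C = 3" using assms(3) card_cyc by metis
  qed simp
  finally show ?thesis by simp
qed



locale sts =
  fixes n :: nat and B :: "nat set set"
  assumes sts: "steiner_triple_system n B"
begin

lemma blocks: "b \<in> B \<Longrightarrow> b \<subseteq> {0..<n} \<and> card b = 3"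
  using sts by (auto simp: steiner_triple_system_def)

lemma uniq: "x < n \<Longrightarrow> y < n \<Longrightarrow> x \<noteq> y \<Longrightarrow> \<exists>!b. b \<in> B \<and> {x, y} \<subseteq> b"
  using sts by (auto simp: steiner_triple_system_def)

lemma OT_range: "(x, y, z) \<in> OT B \<Longrightarrow> x < n \<and> y < n \<and> z < n"
  using blocks by (fastforce simp: OT_def)

lemma OT_unique:
  assumes "(x, y, z) \<in> OT B" "(x, y, z') \<in> OT B"
  shows "z = z'"
proof -
  have b1: "{x, y, z} \<in> B" "x \<noteq> y" "z \<noteq> x" "z \<noteq> y" using assms(1) by (auto simp: OT_def)
  have b2: "{x, y, z'} \<in> B" "z' \<noteq> x" "z' \<noteq> y" using assms(2) by (auto simp: OT_def)
  have "x < n" "y < n" using OT_range assms(1) by auto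
  from uniq[OF this b1(2)] b1(1) b2(1) have "{x, y, z} = {x, y, z'}" by auto
  then have "z' \<in> {x, y, z}" by auto
  then show ?thesis using b2 by auto
qed

lemma OT_exists:
  assumes "x < n" "y < n" "x \<noteq> y"
  shows "\<exists>z. (x, y, z) \<in> OT B"
proof -
  obtain b where b: "b \<in> B" "{x, y} \<subseteq> b" using uniq[OF assms] by blast
  have c: "card b = 3" "finite b" using blocks[OF b(1)] finite_subset[of b "{0..<n}"] by auto
  have "card (b - {x, y}) = 1" using c b(2) assms(3) by (simp add: card_Diff_subset)
  then obtain z where z: "b - {x, y} = {z}" by (rule card_1_singletonE)
  then have "b = {x, y, z}" "z \<noteq> x" "z \<noteq> y" using b(2) by auto
  then show ?thesis using b(1) assms(3) by (auto simp: OT_def)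
qed

lemma OT_finite: "finite (OT B)"
proof -
  have "OT B \<subseteq> {0..<n} \<times> {0..<n} \<times> {0..<n}" using OT_range by auto
  then show ?thesis by (rule finite_subset) auto
qed

definition Cyc where "Cyc = cyc ` OT B"

lemma Cyc_finite: "finite Cyc"
  unfolding Cyc_def using OT_finite by simp

lemma CycE:
  assumes "C \<in> Cyc"
  obtains x y z where "C = cyc (x, y, z)" "(x, y, z) \<in> OT B"
  using assms unfolding Cyc_def by auto

lemma Cyc_props:
  assumes "C \<in> Cyc"
  shows "C \<subseteq> OT B" "card (csupp C) = 3" "csupp C \<subseteq> {0..<n}"
    "(\<lambda>(r, c, s). r) ` C = csupp C" "(\<lambda>(r, c, s). c) ` C = csupp C"
    "(\<lambda>(r, c, s). s) ` C = csupp C"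
    "inj_on (\<lambda>(r, c, s). r) C" "inj_on (\<lambda>(r, c, s). c) C" "inj_on (\<lambda>(r, c, s). s) C"
proof -
  obtain x y z where C: "C = cyc (x, y, z)" "(x, y, z) \<in> OT B" using assms by (rule CycE)
  have d: "x \<noteq> y" "y \<noteq> z" "x \<noteq> z" using OT_distinct[OF C(2)] by auto
  have r: "x < n" "y < n" "z < n" using OT_range[OF C(2)] by auto
  show "C \<subseteq> OT B" using C cyc_OT by blast
  show "card (csupp C) = 3" "csupp C \<subseteq> {0..<n}"
    using cyc_proj[OF d] d r C by (auto simp: csupp_def)
  show "(\<lambda>(r, c, s). r) ` C = csupp C" "(\<lambda>(r, c, s). c) ` C = csupp C"
    "(\<lambda>(r, c, s). s) ` C = csupp C"
    "inj_on (\<lambda>(r, c, s). r) C" "inj_on (\<lambda>(r, c, s). c) C" "inj_on (\<lambda>(r, c, s). s) C"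
    using cyc_proj[OF d] C by (auto simp: csupp_def)
qed

fun valid :: "(nat \<times> nat \<times> nat) set list \<Rightarrow> bool" where
  "valid [] = True"
| "valid (c # cs) = (c \<in> Cyc \<and> csupp c \<inter> used cs = {} \<and> valid cs)"

lemma used_Cons: "used (c # cs) = csupp c \<union> used cs"
  by (simp add: used_def)

lemma valid_props0:
  "valid cs \<Longrightarrow> card (used cs) = 3 * length cs \<and> used cs \<subseteq> {0..<n} \<and> distinct cs \<and> set cs \<subseteq> Cyc
    \<and> finite (used cs)"
proof (induction cs)
  case Nil
  then show ?case by (simp add: used_def)
next
  case (Cons c cs)
  have c: "c \<in> Cyc" "csupp c \<inter> used cs = {}" "valid cs" using Cons.prems by auto
  note IH = Cons.IH[OF c(3)]
  note P = Cyc_props[OF c(1)]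
  have fc: "finite (csupp c)" using P(2) by (metis card.infinite zero_neq_numeral)
  have fu: "finite (used cs)" using IH by simp
  have "c \<notin> set cs"
  proof
    assume "c \<in> set cs"
    then have "csupp c \<subseteq> used cs" by (auto simp: used_def)
    then have "csupp c = {}" using c(2) by auto
    then show False using P(2) by simp
  qed
  then show ?case using IH c P fc fu
    by (simp add: used_Cons card_Un_disjoint)
qed

lemma valid_props:
  assumes "valid cs"
  shows "card (used cs) = 3 * length cs" "used cs \<subseteq> {0..<n}" "distinct cs" "set cs \<subseteq> Cyc"
    "finite (used cs)"
  using valid_props0[OF assms] by auto

lemma valid_disj:
  assumes "valid cs" "C1 \<in> set cs" "C2 \<in> set cs" "C1 \<noteq> C2"
  shows "csupp C1 \<inter> csupp C2 = {}"
  using assms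
proof (induction cs)
  case Nil then show ?case by simp
next
  case (Cons c cs)
  then show ?case by (auto simp: used_def)
qed

end



context sts
begin

definition TT :: "(nat \<times> nat \<times> nat) set list \<Rightarrow> (nat \<times> nat \<times> nat) set" where
  "TT cs = {(a, a, a) | a. a \<in> {0..<n} - used cs} \<union> \<Union>(set cs)"

lemma TT_alt: "TT cs = (\<lambda>a. (a, a, a)) ` ({0..<n} - used cs) \<union> \<Union>(set cs)"
  unfolding TT_def by blast

lemma proj_gen:
  fixes p :: "nat \<times> nat \<times> nat \<Rightarrow> nat"
  assumes hC: "\<And>C. C \<in> Cyc \<Longrightarrow> p ` C = csupp C \<and> inj_on p C"
    and hd: "\<And>a. p (a, a, a) = a"
    and v: "valid cs"
  shows "p ` TT cs = {0..<n}" "inj_on p (TT cs)"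
proof -
  note V = valid_props[OF v]
  let ?D = "(\<lambda>a. (a, a, a)) ` ({0..<n} - used cs)"
  let ?U = "\<Union>(set cs)"
  have pD: "p ` ?D = {0..<n} - used cs" by (simp add: image_image hd)
  have pU: "p ` ?U = used cs"
  proof -
    have "p ` ?U = (\<Union>C\<in>set cs. p ` C)" by (rule image_Union)
    also have "\<dots> = (\<Union>C\<in>set cs. csupp C)"
      by (rule SUP_cong) (use hC V(4) in blast)+
    finally show ?thesis by (simp add: used_def)
  qed
  show "p ` TT cs = {0..<n}" unfolding TT_alt image_Un pD pU using V(2) by blast
  have iD: "inj_on p ?D" by (rule inj_onI) (auto simp: hd)
  have iU: "inj_on p ?U"
  proof (rule inj_onI)
    fix s t assume s: "s \<in> ?U" and t: "t \<in> ?U" and e: "p s = p t"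
    from s obtain C1 where C1: "C1 \<in> set cs" "s \<in> C1" by (rule UnionE)
    from t obtain C2 where C2: "C2 \<in> set cs" "t \<in> C2" by (rule UnionE)
    have h1: "p ` C1 = csupp C1" "inj_on p C1" using hC[of C1] C1(1) V(4) by auto
    have h2: "p ` C2 = csupp C2" using hC[of C2] C2(1) V(4) by auto
    have m1: "p s \<in> csupp C1" using h1(1) C1(2) by (metis imageI)
    have m2: "p t \<in> csupp C2" using h2(1) C2(2) by (metis imageI)
    have "C1 = C2"
    proof (rule ccontr)
      assume "C1 \<noteq> C2"
      then have "csupp C1 \<inter> csupp C2 = {}" using valid_disj[OF v C1(1) C2(1)] by simp
      then show False using m1 m2 e by (metis disjoint_iff)
    qed
    then show "s = t" using h1(2) C1(2) C2(2) e by (metis inj_onD)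
  qed
  have dj: "p ` ?D \<inter> p ` (?U - ?D) = {}" using pD pU by blast
  show "inj_on p (TT cs)" unfolding TT_alt
    using inj_on_Un[of p ?D ?U] iD iU dj by blast
qed

lemma S_eq: "steiner_latin_square n B = {(a, a, a) | a. a \<in> {0..<n}} \<union> OT B"
  by (simp add: steiner_latin_square_def OT_def)

lemma TT_transversal:
  assumes v: "valid cs"
  shows "transversal n (steiner_latin_square n B) (TT cs)"
proof -
  note V = valid_props[OF v]
  have h1: "\<And>C. C \<in> Cyc \<Longrightarrow> (\<lambda>(r, c, s). r) ` C = csupp C \<and> inj_on (\<lambda>(r, c, s). r) C"
    using Cyc_props(4,7) by blast
  have h2: "\<And>C. C \<in> Cyc \<Longrightarrow> (\<lambda>(r, c, s). c) ` C = csupp C \<and> inj_on (\<lambda>(r, c, s). c) C"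
    using Cyc_props(5,8) by blast
  have h3: "\<And>C. C \<in> Cyc \<Longrightarrow> (\<lambda>(r, c, s). s) ` C = csupp C \<and> inj_on (\<lambda>(r, c, s). s) C"
    using Cyc_props(6,9) by blast
  have p1: "(\<lambda>(r, c, s). r) ` TT cs = {0..<n}" "inj_on (\<lambda>(r, c, s). r) (TT cs)"
    using proj_gen[OF h1 _ v] by simp_all
  have p2: "(\<lambda>(r, c, s). c) ` TT cs = {0..<n}"
    using proj_gen[OF h2 _ v] by simp_all
  have p3: "inj_on (\<lambda>(r, c, s). s) (TT cs)"
    using proj_gen[OF h3 _ v] by simp_all
  have sub: "TT cs \<subseteq> steiner_latin_square n B"
  proof -
    have "\<Union>(set cs) \<subseteq> OT B" using V(4) Cyc_props(1) by blast
    then show ?thesis unfolding S_eq TT_def by blast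
  qed
  have "card (TT cs) = n" using card_image[OF p1(2)] p1(1) by simp
  then show ?thesis using sub p1 p2 p3 by (simp add: transversal_def)
qed

lemma TT_offdiag:
  assumes v: "valid cs"
  shows "\<Union>(set cs) = TT cs \<inter> {(a, b, c). a \<noteq> b}"
proof -
  note V = valid_props[OF v]
  have "\<And>a b c. (a, b, c) \<in> \<Union>(set cs) \<Longrightarrow> a \<noteq> b"
    using V(4) Cyc_props(1) OT_distinct by blast
  then show ?thesis unfolding TT_def by auto
qed

lemma set_from_union:
  assumes v: "valid cs"
  shows "set cs = cyc ` \<Union>(set cs)"
proof -
  note V = valid_props[OF v]
  have key: "\<And>C t. C \<in> set cs \<Longrightarrow> t \<in> C \<Longrightarrow> cyc t = C"
  proof -
    fix C t assume "C \<in> set cs" "t \<in> C"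
    then obtain x y z where "C = cyc (x, y, z)" using V(4) CycE by blast
    then show "cyc t = C" using \<open>t \<in> C\<close> cyc_eq by blast
  qed
  show ?thesis
  proof
    show "set cs \<subseteq> cyc ` \<Union>(set cs)"
    proof
      fix C assume C: "C \<in> set cs"
      then obtain x y z where "C = cyc (x, y, z)" using V(4) CycE by blast
      then have "(x, y, z) \<in> C" using cyc_self by blast
      then show "C \<in> cyc ` \<Union>(set cs)" using key C by (metis UnionI imageI)
    qed
    show "cyc ` \<Union>(set cs) \<subseteq> set cs" using key by blast
  qed
qed

lemma TT_inj:
  assumes "valid cs" "valid ds" "TT cs = TT ds"
  shows "set cs = set ds"
  using set_from_union[OF assms(1)] set_from_union[OF assms(2)]
    TT_offdiag[OF assms(1)] TT_offdiag[OF assms(2)] assms(3) by simp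

end



context sts
begin

lemma count_avoid:
  assumes X: "X \<subseteq> {0..<n}"
  shows "(n - card X) * (n - 2 * card X - 1) \<le> 3 * card {c \<in> Cyc. csupp c \<inter> X = {}}"
proof -
  define s where "s = card X"
  define Y where "Y = {0..<n} - X"
  have fX: "finite X" using X finite_subset by blast
  have cY: "card Y = n - s" unfolding Y_def s_def using X by (simp add: card_Diff_subset fX)
  have fY: "finite Y" unfolding Y_def by simp
  define A where "A = {(x, y, z). (x, y, z) \<in> OT B \<and> x \<in> Y \<and> y \<in> Y \<and> z \<in> Y}"
  have fA: "finite A" using OT_finite unfolding A_def by (rule rev_finite_subset) auto
  have Arot: "\<And>t. t \<in> A \<Longrightarrow> cyc t \<subseteq> A"
  proof -
    fix t assume "t \<in> A"
    then obtain x y z where t: "t = (x, y, z)" "(x, y, z) \<in> OT B" "x \<in> Y" "y \<in> Y" "z \<in> Y"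
      unfolding A_def by auto
    have "(y, z, x) \<in> OT B" "(z, x, y) \<in> OT B" using OT_perm(1)[OF t(2)] OT_perm(1) by blast+
    then show "cyc t \<subseteq> A" using t unfolding t(1) A_def cyc_simp by auto
  qed
  have Ad: "\<And>x y z. (x, y, z) \<in> A \<Longrightarrow> x \<noteq> y \<and> y \<noteq> z \<and> x \<noteq> z"
    unfolding A_def using OT_distinct by auto
  have cA: "card A = 3 * card (cyc ` A)" by (rule card_cyc_image[OF fA Arot Ad])
  have sub: "cyc ` A \<subseteq> {c \<in> Cyc. csupp c \<inter> X = {}}"
  proof
    fix c assume "c \<in> cyc ` A"
    then obtain x y z where c: "c = cyc (x, y, z)" "(x, y, z) \<in> A" by auto
    then have o: "(x, y, z) \<in> OT B" "x \<in> Y" "y \<in> Y" "z \<in> Y" unfolding A_def by auto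
    have "csupp c = {x, y, z}" unfolding c csupp_def cyc_simp by auto
    then have "csupp c \<inter> X = {}" using o Y_def by auto
    moreover have "c \<in> Cyc" unfolding Cyc_def c using o by auto
    ultimately show "c \<in> {c \<in> Cyc. csupp c \<inter> X = {}}" by simp
  qed
  have fC: "finite {c \<in> Cyc. csupp c \<inter> X = {}}" using Cyc_finite by simp
  have le1: "card A \<le> 3 * card {c \<in> Cyc. csupp c \<inter> X = {}}"
    using cA card_mono[OF fC sub] by simp
  define P where "P = (SIGMA x:Y. Y - {x})"
  have cP: "card P = (n - s) * (n - s - 1)"
  proof -
    have "card P = (\<Sum>x\<in>Y. card (Y - {x}))" unfolding P_def using fY by simp
    also have "\<dots> = (\<Sum>x\<in>Y. n - s - 1)"
      by (rule sum.cong) (use cY fY in auto)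
    finally show ?thesis using cY by simp
  qed
  define Q where "Q w = {(x, y). x \<in> Y \<and> (x, y, w) \<in> OT B}" for w
  have cQ: "card (Q w) \<le> n - s" for w
  proof -
    have inj: "inj_on fst (Q w)"
    proof (rule inj_onI)
      fix a b assume a: "a \<in> Q w" and b: "b \<in> Q w" and e: "fst a = fst b"
      obtain x y where a': "a = (x, y)" "(x, y, w) \<in> OT B" using a unfolding Q_def by auto
      obtain x' y' where b': "b = (x', y')" "(x', y', w) \<in> OT B" using b unfolding Q_def by auto
      have "x = x'" using e a' b' by simp
      then have "(x, w, y) \<in> OT B" "(x, w, y') \<in> OT B" using a'(2) b'(2) OT_perm(2) by blast+
      then have "y = y'" by (rule OT_unique)
      then show "a = b" using a' b' \<open>x = x'\<close> by simp
    qed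
    have "fst ` Q w \<subseteq> Y" unfolding Q_def by auto
    then have "card (fst ` Q w) \<le> card Y" using fY by (simp add: card_mono)
    then show ?thesis using card_image[OF inj] cY by simp
  qed
  have fQ: "finite (Q w)" for w
  proof -
    have "Q w \<subseteq> Y \<times> {0..<n}" unfolding Q_def using OT_range by auto
    moreover have "finite (Y \<times> {0..<n})" using fY by simp
    ultimately show ?thesis by (rule finite_subset)
  qed
  have Pcov: "P \<subseteq> (\<lambda>(x, y, z). (x, y)) ` A \<union> (\<Union>w\<in>X. Q w)"
  proof
    fix q assume "q \<in> P"
    then obtain x y where q: "q = (x, y)" "x \<in> Y" "y \<in> Y" "x \<noteq> y" unfolding P_def by auto
    have "x < n" "y < n" using q Y_def by auto
    then obtain z where z: "(x, y, z) \<in> OT B" using OT_exists q(4) by blast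
    have "z < n" using OT_range z by auto
    show "q \<in> (\<lambda>(x, y, z). (x, y)) ` A \<union> (\<Union>w\<in>X. Q w)"
    proof (cases "z \<in> X")
      case True
      then show ?thesis using q z unfolding Q_def by auto
    next
      case False
      then have "z \<in> Y" using \<open>z < n\<close> Y_def by auto
      then have "(x, y, z) \<in> A" using q z unfolding A_def by auto
      then show ?thesis using q by force
    qed
  qed
  have "card P \<le> card ((\<lambda>(x, y, z). (x, y)) ` A \<union> (\<Union>w\<in>X. Q w))"
    by (rule card_mono) (use fA fX fQ in auto, use Pcov in blast)
  also have "\<dots> \<le> card ((\<lambda>(x, y, z). (x, y)) ` A) + card (\<Union>w\<in>X. Q w)"
    by (rule card_Un_le)
  also have "\<dots> \<le> card A + (\<Sum>w\<in>X. card (Q w))"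
    using card_image_le[OF fA, of "\<lambda>(x, y, z). (x, y)"] card_UN_le[OF fX, of Q] by linarith
  also have "\<dots> \<le> card A + s * (n - s)"
    using sum_bounded_above[of X "\<lambda>w. card (Q w)" "n - s"] cQ s_def by auto
  finally have "(n - s) * (n - s - 1) \<le> card A + s * (n - s)" using cP by simp
  then have "(n - s) * (n - s - 1) - s * (n - s) \<le> card A" by linarith
  moreover have "(n - s) * (n - s - 1) - s * (n - s) = (n - s) * (n - 2 * s - 1)"
  proof -
    have e: "n - s - 1 - s = n - 2 * s - 1" by arith
    have "(n - s) * (n - s - 1) - s * (n - s) = (n - s) * (n - s - 1) - (n - s) * s"
      by (simp add: mult.commute)
    also have "\<dots> = (n - s) * (n - s - 1 - s)" by (rule diff_mult_distrib2[symmetric])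
    finally show ?thesis using e by simp
  qed
  ultimately show ?thesis using le1 s_def by simp
qed

end



context sts
begin

definition VL :: "nat \<Rightarrow> (nat \<times> nat \<times> nat) set list set" where
  "VL k = {cs. length cs = k \<and> valid cs}"

lemma VL_finite: "finite (VL k)"
proof -
  have "VL k \<subseteq> {xs. set xs \<subseteq> Cyc \<and> length xs = k}"
    unfolding VL_def using valid_props(4) by blast
  then show ?thesis using finite_lists_length_eq[OF Cyc_finite] by (rule finite_subset)
qed

lemma VL_Suc:
  "VL (Suc k) = (\<lambda>(cs, c). c # cs) ` (SIGMA cs:VL k. {c \<in> Cyc. csupp c \<inter> used cs = {}})"
proof
  show "VL (Suc k) \<subseteq> (\<lambda>(cs, c). c # cs) ` (SIGMA cs:VL k. {c \<in> Cyc. csupp c \<inter> used cs = {}})"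
  proof
    fix xs assume "xs \<in> VL (Suc k)"
    then obtain c cs where xs: "xs = c # cs" "length cs = k" "valid (c # cs)"
      unfolding VL_def by (cases xs) auto
    then have "(cs, c) \<in> (SIGMA cs:VL k. {c \<in> Cyc. csupp c \<inter> used cs = {}})"
      unfolding VL_def by auto
    then show "xs \<in> (\<lambda>(cs, c). c # cs) ` (SIGMA cs:VL k. {c \<in> Cyc. csupp c \<inter> used cs = {}})"
      using xs(1) by force
  qed
  show "(\<lambda>(cs, c). c # cs) ` (SIGMA cs:VL k. {c \<in> Cyc. csupp c \<inter> used cs = {}}) \<subseteq> VL (Suc k)"
    unfolding VL_def by auto
qed

lemma VL_count:
  "(\<Prod>i<k. (n - 3 * i) * (n - 2 * (3 * i) - 1)) \<le> 3 ^ k * card (VL k)"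
proof (induction k)
  case 0
  have "VL 0 = {[]}" unfolding VL_def by auto
  then show ?case by simp
next
  case (Suc k)
  let ?F = "\<lambda>cs. {c \<in> Cyc. csupp c \<inter> used cs = {}}"
  have inj: "inj_on (\<lambda>(cs, c). c # cs) (SIGMA cs:VL k. ?F cs)"
    by (auto simp: inj_on_def)
  have fF: "\<forall>cs\<in>VL k. finite (?F cs)" using Cyc_finite by simp
  have cS: "card (VL (Suc k)) = (\<Sum>cs\<in>VL k. card (?F cs))"
    unfolding VL_Suc card_image[OF inj] using VL_finite fF by simp
  have each: "(n - 3 * k) * (n - 2 * (3 * k) - 1) \<le> 3 * card (?F cs)" if "cs \<in> VL k" for cs
  proof -
    have v: "valid cs" "length cs = k" using that unfolding VL_def by auto
    have "card (used cs) = 3 * k" using valid_props(1)[OF v(1)] v(2) by simp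
    then show ?thesis using count_avoid[OF valid_props(2)[OF v(1)]] by simp
  qed
  have "card (VL k) * ((n - 3 * k) * (n - 2 * (3 * k) - 1)) \<le> 3 * card (VL (Suc k))"
  proof -
    have "card (VL k) * ((n - 3 * k) * (n - 2 * (3 * k) - 1))
        = (\<Sum>cs\<in>VL k. (n - 3 * k) * (n - 2 * (3 * k) - 1))" by simp
    also have "\<dots> \<le> (\<Sum>cs\<in>VL k. 3 * card (?F cs))" by (rule sum_mono) (rule each)
    also have "\<dots> = 3 * card (VL (Suc k))" unfolding cS by (simp add: sum_distrib_left)
    finally show ?thesis .
  qed
  then have B: "3 ^ k * (card (VL k) * ((n - 3 * k) * (n - 2 * (3 * k) - 1)))
      \<le> 3 ^ k * (3 * card (VL (Suc k)))" by (rule mult_left_mono) simp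
  have "(\<Prod>i<Suc k. (n - 3 * i) * (n - 2 * (3 * i) - 1))
      = (\<Prod>i<k. (n - 3 * i) * (n - 2 * (3 * i) - 1)) * ((n - 3 * k) * (n - 2 * (3 * k) - 1))"
    by (rule prod.lessThan_Suc)
  also have "\<dots> \<le> (3 ^ k * card (VL k)) * ((n - 3 * k) * (n - 2 * (3 * k) - 1))"
    by (rule mult_right_mono[OF Suc.IH]) simp
  also have "\<dots> = 3 ^ k * (card (VL k) * ((n - 3 * k) * (n - 2 * (3 * k) - 1)))"
    by (rule mult.assoc)
  also have "\<dots> \<le> 3 ^ k * (3 * card (VL (Suc k)))" by (rule B)
  also have "\<dots> = 3 ^ Suc k * card (VL (Suc k))" by simp
  finally show ?case .
qed

lemma VL_fibres:
  "card (VL k) \<le> fact k * card (TT ` VL k)"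
proof -
  have fib: "card {cs \<in> VL k. TT cs = T} \<le> fact k" if T: "T \<in> TT ` VL k" for T
  proof -
    obtain cs0 where cs0: "cs0 \<in> VL k" "T = TT cs0" using T by auto
    have v0: "valid cs0" "length cs0 = k" using cs0 unfolding VL_def by auto
    have "{cs \<in> VL k. TT cs = T} \<subseteq> permutations_of_set (set cs0)"
    proof
      fix cs assume "cs \<in> {cs \<in> VL k. TT cs = T}"
      then have v: "valid cs" "TT cs = TT cs0" using cs0 unfolding VL_def by auto
      have "set cs = set cs0" by (rule TT_inj[OF v(1) v0(1) v(2)])
      then show "cs \<in> permutations_of_set (set cs0)"
        using valid_props(3)[OF v(1)] by (auto simp: permutations_of_set_def)
    qed
    then have "card {cs \<in> VL k. TT cs = T} \<le> card (permutations_of_set (set cs0))"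
      by (rule card_mono[rotated]) simp
    also have "\<dots> = fact (card (set cs0))" by simp
    also have "card (set cs0) = k" using distinct_card[OF valid_props(3)[OF v0(1)]] v0(2) by simp
    finally show ?thesis .
  qed
  have "VL k = (\<Union>T\<in>TT ` VL k. {cs \<in> VL k. TT cs = T})" by auto
  then have "card (VL k) \<le> (\<Sum>T\<in>TT ` VL k. card {cs \<in> VL k. TT cs = T})"
    using card_UN_le[of "TT ` VL k" "\<lambda>T. {cs \<in> VL k. TT cs = T}"] VL_finite by simp
  also have "\<dots> \<le> card (TT ` VL k) * fact k"
    using sum_bounded_above[of "TT ` VL k" "\<lambda>T. card {cs \<in> VL k. TT cs = T}" "fact k"] fib by simp
  finally show ?thesis by (simp add: mult.commute)
qed

lemma main_count:
  "(\<Prod>i<k. (n - 3 * i) * (n - 2 * (3 * i) - 1))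
     \<le> 3 ^ k * fact k * num_transversals n (steiner_latin_square n B)"
proof -
  let ?S = "steiner_latin_square n B"
  have fS: "finite ?S" unfolding S_eq using OT_finite by simp
  have sub: "TT ` VL k \<subseteq> {T. transversal n ?S T}"
    using TT_transversal unfolding VL_def by auto
  have fT: "finite {T. transversal n ?S T}"
    by (rule finite_subset[of _ "Pow ?S"]) (auto simp: transversal_def fS)
  have "card (TT ` VL k) \<le> num_transversals n ?S"
    unfolding num_transversals_def by (rule card_mono[OF fT sub])
  then have "card (VL k) \<le> fact k * num_transversals n ?S"
    using VL_fibres[of k] by (meson le_trans mult_le_mono2)
  then have "3 ^ k * card (VL k) \<le> 3 ^ k * (fact k * num_transversals n ?S)" by simp
  then have "(\<Prod>i<k. (n - 3 * i) * (n - 2 * (3 * i) - 1)) \<le> 3 ^ k * (fact k * num_transversals n ?S)"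
    using VL_count[of k] by (rule order.trans[rotated])
  then show ?thesis by (simp only: mult.assoc)
qed

end



lemma fact_split: "k < j \<Longrightarrow> fact (j - k) = (j - k) * (fact (j - Suc k) :: nat)"
proof -
  assume "k < j"
  then have "j - k = Suc (j - Suc k)" by arith
  then show ?thesis by (simp only: fact_Suc) simp
qed

lemma gen: "18 * (P * (a * x) * (b * y)) = P * (18 * (a * b)) * (x * (y::nat))"
  by (simp add: ac_simps)

lemma arithA:
  fixes m k :: nat
  assumes "k \<le> m"
  shows "18 ^ k * fact (2 * m) * fact m
     \<le> (\<Prod>i<k. (6 * m + 1 - 3 * i) * (6 * m + 1 - 2 * (3 * i) - 1)) * fact (2 * m - k) * fact (m - k)"
  using assms
proof (induction k)
  case 0 then show ?case by simp
next
  case (Suc k)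
  let ?P = "\<Prod>i<k. (6 * m + 1 - 3 * i) * (6 * m + 1 - 2 * (3 * i) - 1)"
  let ?c = "(6 * m + 1 - 3 * k) * (6 * m + 1 - 2 * (3 * k) - 1)"
  have km: "k < m" using Suc.prems by simp
  have c: "18 * ((2 * m - k) * (m - k)) \<le> ?c"
  proof -
    have "3 * (2 * m - k) \<le> 6 * m + 1 - 3 * k" using km by arith
    moreover have "6 * (m - k) \<le> 6 * m + 1 - 2 * (3 * k) - 1" using km by arith
    ultimately have "(3 * (2 * m - k)) * (6 * (m - k)) \<le> ?c" by (rule mult_le_mono)
    then show ?thesis by (simp add: algebra_simps)
  qed
  have f1: "fact (2 * m - k) = (2 * m - k) * (fact (2 * m - Suc k) :: nat)"
    using km by (intro fact_split) simp
  have f2: "fact (m - k) = (m - k) * (fact (m - Suc k) :: nat)"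
    using km by (intro fact_split) simp
  have "(18::nat) ^ Suc k * fact (2 * m) * fact m = 18 * (18 ^ k * fact (2 * m) * fact m)" by simp
  also have "\<dots> \<le> 18 * (?P * fact (2 * m - k) * fact (m - k))"
    using Suc.IH km by simp
  also have "\<dots> = ?P * (18 * ((2 * m - k) * (m - k))) * (fact (2 * m - Suc k) * fact (m - Suc k))"
    unfolding f1 f2 by (rule gen)
  also have "\<dots> \<le> ?P * ?c * (fact (2 * m - Suc k) * fact (m - Suc k))"
    using c by (intro mult_right_mono mult_left_mono) simp_all
  also have "\<dots> = (\<Prod>i<Suc k. (6 * m + 1 - 3 * i) * (6 * m + 1 - 2 * (3 * i) - 1))
      * fact (2 * m - Suc k) * fact (m - Suc k)"
    by (simp add: mult.assoc)
  finally show ?case .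
qed

lemma arithB:
  fixes m k :: nat
  assumes "k \<le> m - 1" "m \<ge> 1"
  shows "18 ^ k * fact (2 * m - 1) * fact (m - 1)
     \<le> (\<Prod>i<k. (6 * m - 3 - 3 * i) * (6 * m - 3 - 2 * (3 * i) - 1)) * fact (2 * m - 1 - k) * fact (m - 1 - k)"
  using assms
proof (induction k)
  case 0 then show ?case by simp
next
  case (Suc k)
  let ?P = "\<Prod>i<k. (6 * m - 3 - 3 * i) * (6 * m - 3 - 2 * (3 * i) - 1)"
  let ?c = "(6 * m - 3 - 3 * k) * (6 * m - 3 - 2 * (3 * k) - 1)"
  have km: "k < m - 1" using Suc.prems by simp
  have c: "18 * ((2 * m - 1 - k) * (m - 1 - k)) \<le> ?c"
  proof -
    have "3 * (2 * m - 1 - k) \<le> 6 * m - 3 - 3 * k" using km by arith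
    moreover have "6 * (m - 1 - k) \<le> 6 * m - 3 - 2 * (3 * k) - 1" using km by arith
    ultimately have "(3 * (2 * m - 1 - k)) * (6 * (m - 1 - k)) \<le> ?c" by (rule mult_le_mono)
    then show ?thesis by (simp add: algebra_simps)
  qed
  have f1: "fact (2 * m - 1 - k) = (2 * m - 1 - k) * (fact (2 * m - 1 - Suc k) :: nat)"
    using km by (intro fact_split) simp
  have f2: "fact (m - 1 - k) = (m - 1 - k) * (fact (m - 1 - Suc k) :: nat)"
    using km by (intro fact_split) simp
  have "(18::nat) ^ Suc k * fact (2 * m - 1) * fact (m - 1) = 18 * (18 ^ k * fact (2 * m - 1) * fact (m - 1))" by simp
  also have "\<dots> \<le> 18 * (?P * fact (2 * m - 1 - k) * fact (m - 1 - k))"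
    using Suc.IH km Suc.prems by simp
  also have "\<dots> = ?P * (18 * ((2 * m - 1 - k) * (m - 1 - k))) * (fact (2 * m - 1 - Suc k) * fact (m - 1 - Suc k))"
    unfolding f1 f2 by (rule gen)
  also have "\<dots> \<le> ?P * ?c * (fact (2 * m - 1 - Suc k) * fact (m - 1 - Suc k))"
    using c by (intro mult_right_mono mult_left_mono) simp_all
  also have "\<dots> = (\<Prod>i<Suc k. (6 * m - 3 - 3 * i) * (6 * m - 3 - 2 * (3 * i) - 1))
      * fact (2 * m - 1 - Suc k) * fact (m - 1 - Suc k)"
    by (simp add: mult.assoc)
  finally show ?case .
qed



lemma final_real:
  fixes t m d :: nat
  assumes "6 ^ (m - 1) * fact d \<le> fact m * t" "m \<ge> 1"
  shows "real t \<ge> 6 ^ (m - 1) * fact d / (fact m * real m)"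
proof -
  have pos: "(0::real) < fact m * real m" using assms(2) by simp
  have "real (6 ^ (m - 1) * fact d) \<le> real (fact m * t)" using assms(1) by (rule of_nat_mono)
  then have "6 ^ (m - 1) * fact d \<le> fact m * real t" by simp
  also have "\<dots> \<le> fact m * real t * real m"
  proof -
    have "(1::real) \<le> real m" using assms(2) by simp
    then have "fact m * real t * 1 \<le> fact m * real t * real m"
      by (rule mult_left_mono) simp
    then show ?thesis by simp
  qed
  finally show ?thesis using pos by (simp add: divide_le_eq mult_ac)
qed

theorem theorem1:
  fixes n :: nat and S :: "(nat \<times> nat \<times> nat) set"
  assumes "n \<ge> 3"
    and "n mod 6 = 1 \<or> n mod 6 = 3"
    and "is_steiner_latin_square n S"
  shows "real (num_transversals n S) \<ge>
    (let m = nat \<lceil>(real n - 1) / 6\<rceil> in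
       6 ^ (m - 1) * fact (n div 3) / (fact m * real m))"
proof -
  obtain B where B: "steiner_triple_system n B" "S = steiner_latin_square n B"
    using assms(3) unfolding is_steiner_latin_square_def by blast
  interpret sts n B by (rule sts.intro[OF B(1)])
  define t where "t = num_transversals n S"
  define P where "P k = (\<Prod>i<k. (n - 3 * i) * (n - 2 * (3 * i) - 1))" for k
  have MC: "P k \<le> 3 ^ k * fact k * t" for k
    unfolding P_def t_def B(2) by (rule main_count)
  show ?thesis
  proof (cases "n mod 6 = 1")
    case True
    define m where "m = n div 6"
    have n: "n = 6 * m + 1" using True m_def by presburger
    have m1: "m \<ge> 1" using assms(1) n by simp
    have cm: "nat \<lceil>(real n - 1) / 6\<rceil> = m"
    proof -
      have "(real n - 1) / 6 = real m" using n by simp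
      then show ?thesis by simp
    qed
    have d: "n div 3 = 2 * m" using n by simp
    have A: "18 ^ m * fact (2 * m) * fact m \<le> P m * fact m"
      using arithA[of m m] unfolding P_def n by simp
    then have "18 ^ m * fact (2 * m) \<le> P m" by simp
    then have "18 ^ m * fact (2 * m) \<le> 3 ^ m * fact m * t" using MC[of m] by linarith
    moreover have e: "(18::nat) ^ m = 3 ^ m * 6 ^ m"
      using power_mult_distrib[of "3::nat" 6 m] by simp
    ultimately have "3 ^ m * (6 ^ m * fact (2 * m)) \<le> 3 ^ m * (fact m * t)"
      by (simp only: mult.assoc)
    then have "6 ^ m * fact (2 * m) \<le> fact m * t" by (subst (asm) nat_mult_le_cancel1) simp_all
    moreover have "6 ^ (m - 1) \<le> (6::nat) ^ m" by (rule power_increasing) simp_all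
    ultimately have "6 ^ (m - 1) * fact (2 * m) \<le> fact m * t"
      by (meson le_trans mult_le_mono1)
    then have "real t \<ge> 6 ^ (m - 1) * fact (2 * m) / (fact m * real m)"
      using m1 by (rule final_real)
    then show ?thesis unfolding cm d t_def Let_def .
  next
    case False
    then have r3: "n mod 6 = 3" using assms(2) by simp
    define m where "m = n div 6 + 1"
    have n: "n = 6 * m - 3" "m \<ge> 1" using r3 m_def by presburger+
    have cm: "nat \<lceil>(real n - 1) / 6\<rceil> = m"
    proof -
      have "real n = 6 * real m - 3" using n by (simp add: of_nat_diff)
      then have "\<lceil>(real n - 1) / 6\<rceil> = int m" by (simp add: ceiling_eq_iff)
      then show ?thesis by simp
    qed
    have d: "n div 3 = 2 * m - 1" using n by simp
    have B1: "18 ^ (m - 1) * fact (2 * m - 1) * fact (m - 1) \<le> P (m - 1) * fact m"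
    proof -
      have "2 * m - 1 - (m - 1) = m" "m - 1 - (m - 1) = 0" using n(2) by auto
      then show ?thesis using arithB[of "m - 1" m] n(2) unfolding P_def n(1) by simp
    qed
    have Pm: "P m = P (m - 1) * (6 * m)"
    proof -
      have sm: "Suc (m - 1) = m" using n(2) by simp
      have "P (Suc (m - 1)) = P (m - 1) * ((n - 3 * (m - 1)) * (n - 2 * (3 * (m - 1)) - 1))"
        unfolding P_def by (rule prod.lessThan_Suc)
      then have "P m = P (m - 1) * ((n - 3 * (m - 1)) * (n - 2 * (3 * (m - 1)) - 1))"
        unfolding sm .
      moreover have "(n - 3 * (m - 1)) * (n - 2 * (3 * (m - 1)) - 1) = 6 * m"
      proof -
        have "n - 3 * (m - 1) = 3 * m" "n - 2 * (3 * (m - 1)) - 1 = 2" using n by auto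
        then show ?thesis by simp
      qed
      ultimately show ?thesis by simp
    qed
    have sm1: "Suc (m - 1) = m" using n(2) by simp
    have fm: "fact m = m * (fact (m - 1) :: nat)"
      using fact_Suc[of "m - 1", where 'a=nat] unfolding sm1 by simp
    have "6 * 18 ^ (m - 1) * fact (2 * m - 1) * fact m \<le> P m * fact m"
    proof -
      have "6 * 18 ^ (m - 1) * fact (2 * m - 1) * fact m
          = (18 ^ (m - 1) * fact (2 * m - 1) * fact (m - 1)) * (6 * m)"
        unfolding fm by (simp add: mult_ac)
      also have "\<dots> \<le> P (m - 1) * fact m * (6 * m)" using B1 by (rule mult_right_mono) simp
      also have "\<dots> = P m * fact m" unfolding Pm by (simp add: mult_ac)
      finally show ?thesis .
    qed
    then have "6 * 18 ^ (m - 1) * fact (2 * m - 1) \<le> P m" by simp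
    then have X: "6 * 18 ^ (m - 1) * fact (2 * m - 1) \<le> 3 ^ m * fact m * t"
      using MC[of m] by linarith
    have e3: "3 ^ m = 3 * (3::nat) ^ (m - 1)" using power_Suc[of "3::nat" "m - 1"] unfolding sm1 .
    have e18: "(18::nat) ^ (m - 1) = 3 ^ (m - 1) * 6 ^ (m - 1)"
      using power_mult_distrib[of "3::nat" 6 "m - 1"] by simp
    have "(3 * 3 ^ (m - 1)) * (2 * 6 ^ (m - 1) * fact (2 * m - 1)) = (6::nat) * 18 ^ (m - 1) * fact (2 * m - 1)"
      unfolding e18 by (simp add: mult_ac)
    also have "\<dots> \<le> (3 * 3 ^ (m - 1)) * (fact m * t)" using X unfolding e3 by (simp add: mult_ac)
    finally have "2 * 6 ^ (m - 1) * fact (2 * m - 1) \<le> fact m * t"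
      by (subst (asm) nat_mult_le_cancel1) simp_all
    then have "6 ^ (m - 1) * fact (2 * m - 1) \<le> fact m * t" by linarith
    then have "real t \<ge> 6 ^ (m - 1) * fact (2 * m - 1) / (fact m * real m)"
      using n(2) by (rule final_real)
    then show ?thesis unfolding cm d t_def Let_def .
  qed
qed


end
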